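(* Let $p$ be a prime, $n\ge0$, $X$ a set and $\mathbb Z(X)$ the free abelian group on $X$. Then $W_{n+1,p}(\mathbb Z;\mathbb Z(X))$ is a free abelian group with basis the elements $V^i\tau^{n-i}(x_1\otimes\cdots\otimes x_{p^i})$, where $0\le i\le n$ and $(x_1,\dots,x_{p^i})$ runs over a set of representatives of the orbits $X^{\times p^i}/C_{p^i}$. Moreover, for sets $X,Y$, the monoidal structure map $\star\colon W_{n+1,p}(\mathbb Z;\mathbb Z(X))\otimes W_{n+1,p}(\mathbb Z;\mathbb Z(Y))\to W_{n+1,p}(\mathbb Z;\mathbb Z(X)\otimes\mathbb Z(Y))$ satisfies, for $i\le j$, $$V^i\tau^{n-i}(\otimes_{l=1}^{p^i}x_l)\star V^j\tau^{n-j}(\otimes_{h=1}^{p^j}y_h)=\sum_{\sigma\in C_{p^i}}V^j\Big(\tau^{n-j}\big((\sigma(\otimes_{l=1}^{p^i}x_l))^{\otimes p^{j-i}}\otimes(\otimes_{h=1}^{p^j}y_h)\big)\Big),$$ and symmetrically for $j\le i$: $$V^i\tau^{n-i}(\otimes_{l=1}^{p^i}x_l)\star V^j\tau^{n-j}(\otimes_{h=1}^{p^j}y_h)=\sum_{\sigma\in C_{p^j}}V^i\Big(\tau^{n-i}\big((\otimes_{l=1}^{p^i}x_l)\otimes(\sigma(\otimes_{h=1}^{p^j}y_h))^{\otimes p^{i-j}}\big)\Big),$$ where $A^{\otimes p^k}\otimes B^{\otimes p^k}$ is identified with $(A\otimes B)^{\otimes p^k}$ via the shuffle isomorphism.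
   Context: Notation: for an $R$-bimodule $M$, $M^{\otimes_R k}$ is the tensor power over $R$, $M^{\circledcirc_R k}=M^{\otimes_R k}/[R,M^{\otimes_R k}]$ with cyclic $C_k$-action, transfers are sums over cosets, $x^{\otimes p^k}$ is the image of the $p^k$-fold tensor power, and ghost maps are $w_j(m_0,\dots,m_n)=\sum_{i=0}^j\mathrm{tr}^{C_{p^j}}_{C_{p^{j-i}}}(m_i^{\otimes p^{j-i}})$. $W_{n+1,p}(R;M)$ is the quotient of $\prod_{i=0}^nM^{\otimes_Rp^i}$ by the equivalence relation generated by: $a\sim b$ if for a free resolution $(\bar S;\bar Q)\rightrightarrows^{f,g}(S;Q)\xrightarrow\epsilon(R;M)$ there are $q,u,z$ with $\epsilon_*q=a,\epsilon_*u=b,w(q)=w(f_*z),w(u)=w(g_*z)$; for $(\mathbb Z;\mathbb Z(X))$ it is just the quotient making $w$ injective. It has the unique natural abelian group and lax symmetric monoidal structure ($\star$) making all $w_j$ additive and monoidal. Operators: $\tau^{k}\colon M^{\otimes_R p^i}\to W_{k+1,p}(R;M^{\otimes_Rp^i})$, $m\mapsto(m,0,\dots,0)$ (Teichmüller map), and $V^i\colon W_{k+1,p}(R;M^{\otimes_Rp^i})\to W_{k+i+1,p}(R;M)$, $(x_0,\dots,x_k)\mapsto(0,\dots,0,x_0,\dots,x_k)$ ($i$ zeros), using $(M^{\otimes_Rp^i})^{\otimes_Rp^l}\cong M^{\otimes_Rp^{i+l}}$. Thus $V^i\tau^{n-i}(y)$ is the class of the sequence with $y$ in position $i$ and $0$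 elsewhere. *)

theory Defs
  imports Main "HOL-Computational_Algebra.Primes"
begin

text \<open>Z(X)^{tensor k} = Z(X^k): finitely supported integer functions on k-tuples
  (lists of length k) with entries in X.\<close>
definition tensor_pow_grp :: "'a set \<Rightarrow> nat \<Rightarrow> ('a list \<Rightarrow> int) set" where
  "tensor_pow_grp X k = {f. finite {L. f L \<noteq> 0} \<and>
      (\<forall>L. f L \<noteq> 0 \<longrightarrow> length L = k \<and> set L \<subseteq> X)}"

text \<open>r-fold tensor power of f in Z(X^k), landing in Z(X^(r*k)).\<close>
definition tpow :: "nat \<Rightarrow> nat \<Rightarrow> ('a list \<Rightarrow> int) \<Rightarrow> ('a list \<Rightarrow> int)" where
  "tpow k r f = (\<lambda>L. if length L = r * k
      then (\<Prod>t<r. f (take k (drop (t * k) L))) else 0)"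

text \<open>Witt vector representatives: sequences (m_0,...,m_n), m_i in Z(X)^{tensor p^i}.\<close>
definition witt_seqs :: "'a set \<Rightarrow> nat \<Rightarrow> nat \<Rightarrow> (nat \<Rightarrow> 'a list \<Rightarrow> int) set" where
  "witt_seqs X p n = {m. (\<forall>i\<le>n. m i \<in> tensor_pow_grp X (p ^ i)) \<and> (\<forall>i>n. \<forall>L. m i L = 0)}"

text \<open>Ghost maps w_j(m) = sum_{i<=j} tr^{C_{p^j}}_{C_{p^{j-i}}} (m_i^{tensor p^(j-i)}),
  the transfer being the sum over the coset representatives (rotations by s < p^i).\<close>
definition witt_ghost :: "nat \<Rightarrow> nat \<Rightarrow> (nat \<Rightarrow> 'a list \<Rightarrow> int) \<Rightarrow> (nat \<Rightarrow> 'a list \<Rightarrow> int)" where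
  "witt_ghost p n m = (\<lambda>j L. if j \<le> n then
      (\<Sum>i\<le>j. \<Sum>s<p ^ i. tpow (p ^ i) (p ^ (j - i)) (m i) (rotate s L)) else (0::int))"

text \<open>W_{n+1,p}(Z;Z(X)), represented via the injective ghost map as its image,
  with the group structure inherited from the ghost side.\<close>
definition witt_W :: "'a set \<Rightarrow> nat \<Rightarrow> nat \<Rightarrow> (nat \<Rightarrow> 'a list \<Rightarrow> int) set" where
  "witt_W X p n = witt_ghost p n ` witt_seqs X p n"

text \<open>The sequence with the basis tensor y in position i and 0 elsewhere,
  i.e. a representative of V^i tau^{n-i}(y).\<close>
definition Vtau :: "nat \<Rightarrow> 'a list \<Rightarrow> (nat \<Rightarrow> 'a list \<Rightarrow> int)" where
  "Vtau i y = (\<lambda>k. if k = i then (\<lambda>L. if L = y then 1 else 0) else (\<lambda>L. 0))"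

definition orbit_reps :: "'a set \<Rightarrow> nat \<Rightarrow> nat \<Rightarrow> (nat \<Rightarrow> 'a list set) \<Rightarrow> bool" where
  "orbit_reps X p n R \<longleftrightarrow> (\<forall>i\<le>n.
      (\<forall>r\<in>R i. length r = p ^ i \<and> set r \<subseteq> X) \<and>
      (\<forall>x. length x = p ^ i \<and> set x \<subseteq> X \<longrightarrow> (\<exists>!r\<in>R i. \<exists>s. x = rotate s r)))"

definition coeffs :: "nat \<Rightarrow> (nat \<Rightarrow> 'a list set) \<Rightarrow> (nat \<times> 'a list \<Rightarrow> int) set" where
  "coeffs n R = {c. finite {k. c k \<noteq> 0} \<and> (\<forall>i r. c (i, r) \<noteq> 0 \<longrightarrow> i \<le> n \<and> r \<in> R i)}"

definition lincomb :: "nat \<Rightarrow> nat \<Rightarrow> (nat \<times> 'a list \<Rightarrow> int) \<Rightarrow> (nat \<Rightarrow> 'a list \<Rightarrow> int)" where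
  "lincomb p n c = (\<lambda>j L. \<Sum>k\<in>{k. c k \<noteq> 0}. c k * witt_ghost p n (Vtau (fst k) (snd k)) j L)"

text \<open>Ghost-level monoidal product: w_j(a star b) = w_j(a) tensor w_j(b), with
  Z(X^k) tensor Z(Y^k) = Z((X x Y)^k) via the shuffle (zip) isomorphism.\<close>
definition ghost_star :: "(nat \<Rightarrow> 'a list \<Rightarrow> int) \<Rightarrow> (nat \<Rightarrow> 'b list \<Rightarrow> int)
    \<Rightarrow> (nat \<Rightarrow> ('a \<times> 'b) list \<Rightarrow> int)" where
  "ghost_star A B = (\<lambda>j L. A j (map fst L) * B j (map snd L))"

end

theory Submission
  imports Defs "HOL-Number_Theory.Number_Theory"
begin


abbreviation rep :: "nat \<Rightarrow> 'a list \<Rightarrow> 'a list" where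
  "rep k N \<equiv> concat (replicate k N)"

lemma sum_lessThan_add:
  fixes m n :: nat
  shows "(\<Sum>i<m+n. f i) = (\<Sum>i<m. f i) + (\<Sum>i<n. f (m + i)::'b::comm_monoid_add)"
  by (induction n) (simp_all add: add.assoc)

lemma sum_shift_periodic:
  fixes h :: "nat \<Rightarrow> 'b::ab_group_add"
  assumes "\<And>s. h (s + m) = h s"
  shows "(\<Sum>s<m. h (s + t)) = (\<Sum>s<m. h s)"
proof (induction t)
  case 0 show ?case by simp
next
  case (Suc t)
  have "(\<Sum>s<Suc m. h (s + t)) = h t + (\<Sum>s<m. h (Suc s + t))"
    by (subst sum.lessThan_Suc_shift) simp
  moreover have "(\<Sum>s<Suc m. h (s + t)) = (\<Sum>s<m. h (s + t)) + h (m + t)"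
    by simp
  moreover have "h (m + t) = h t" using assms[of t] by (simp add: add.commute)
  ultimately have "(\<Sum>s<m. h (Suc s + t)) = (\<Sum>s<m. h (s + t))"
    by (simp add: add.commute)
  then show ?case using Suc by simp
qed

lemma periodic_mult:
  fixes m s a :: nat
  assumes "\<And>s. h (s + m) = h s"
  shows "h (s + a * m) = h s"
  by (induction a) (simp_all add: assms add.assoc[symmetric] add.commute[of m])

lemma sum_mult_periodic:
  fixes h :: "nat \<Rightarrow> 'b::comm_ring_1"
  assumes "\<And>s. h (s + m) = h s"
  shows "(\<Sum>s<a*m. h s) = of_nat a * (\<Sum>s<m. h s)"
proof (induction a)
  case 0 then show ?case by simp
next
  case (Suc a)
  have "(\<Sum>s<Suc a * m. h s) = (\<Sum>s<a*m. h s) + (\<Sum>s<m. h (a*m + s))"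
    using sum_lessThan_add[of h "a*m" m] by (simp add: add.commute)
  also have "(\<Sum>s<m. h (a*m + s)) = (\<Sum>s<m. h s)"
    using periodic_mult[of h m] assms by (simp add: add.commute)
  finally show ?case using Suc by (simp add: algebra_simps)
qed

lemma sum_reflect_periodic:
  fixes h :: "nat \<Rightarrow> 'b::ab_group_add"
  assumes "\<And>s. h (s + m) = h s"
  shows "(\<Sum>s<m. h (a + m - s)) = (\<Sum>s<m. h s)"
proof -
  have "(\<Sum>s<m. h (a + m - s)) = (\<Sum>s<m. (\<lambda>u. h (u + Suc a)) (m - Suc s))"
    by (rule sum.cong) (auto intro!: arg_cong[where f=h])
  also have "\<dots> = (\<Sum>u<m. h (u + Suc a))" by (rule sum.nat_diff_reindex)
  also have "\<dots> = (\<Sum>s<m. h s)" using sum_shift_periodic[of h m "Suc a"] assms by blast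
  finally show ?thesis .
qed

lemma rotate_inj:
  assumes "rotate n u = rotate n v" shows "u = v"
  using assms
proof (induction n)
  case 0 then show ?case by simp
next
  case (Suc n) then show ?case using inj_rotate1 by (auto dest: injD)
qed

lemma rotate_mult_period:
  assumes "rotate d r = r" shows "rotate (a * d) r = r"
  using assms by (induction a) (simp_all add: rotate_rotate[symmetric] add.commute)

lemma rotate_mod_period:
  assumes "rotate d r = r" shows "rotate (s mod d) r = rotate s r"
proof -
  have "rotate s r = rotate (s mod d + (s div d) * d) r" by simp
  also have "\<dots> = rotate (s mod d) (rotate ((s div d) * d) r)" by (simp add: rotate_rotate)
  finally show ?thesis using rotate_mult_period[OF assms] by simp
qed

lemma rep_Cons_snoc: "rep m (a # x) @ [a] = a # rep m (x @ [a])"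
  by (induction m) simp_all

lemma rotate1_rep: "rotate1 (rep m x) = rep m (rotate1 x)"
proof (cases x)
  case Nil then show ?thesis by simp
next
  case (Cons a x')
  show ?thesis
  proof (cases m)
    case 0 then show ?thesis by simp
  next
    case (Suc m')
    have "rotate1 (rep m x) = x' @ rep m' (a # x') @ [a]" using Cons Suc by simp
    also have "\<dots> = x' @ a # rep m' (x' @ [a])" by (simp add: rep_Cons_snoc)
    finally show ?thesis using Cons Suc by simp
  qed
qed

lemma rotate_rep: "rotate s (rep m x) = rep m (rotate s x)"
  by (induction s) (simp_all add: rotate1_rep)

lemma rep_rep: "rep a (rep b x) = rep (a * b) x"
  by (induction a) (simp_all add: replicate_add)

lemma length_rep[simp]: "length (rep m x) = m * length x"
  by (induction m) simp_all

lemma rotate_period_rep: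
  assumes "rotate d r = r" "length r = k * d"
  shows "r = rep k (take d r)"
  using assms
proof (induction k arbitrary: r)
  case 0 then show ?case by simp
next
  case (Suc k)
  define A where "A = take d r"
  define B where "B = drop d r"
  have r: "r = A @ B" by (simp add: A_def B_def)
  have lA: "length A = d" using Suc.prems by (simp add: A_def)
  have lB: "length B = k * d" using Suc.prems by (simp add: B_def)
  have "rotate d r = B @ A" using rotate_append[of A B] lA r by simp
  then have BA: "B @ A = A @ B" using Suc.prems r by simp
  show ?case
  proof (cases k)
    case 0 then show ?thesis using lB r A_def by simp
  next
    case (Suc k')
    have "take d (B @ A) = A" using BA lA by simp
    then have tB: "take d B = A" using lB Suc by simp
    have "drop d (B @ A) = B" using BA lA by simp
    then have "drop d B @ A = B" using lB Suc by simp
    have "rotate d B = B"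
    proof (cases "d < length B")
      case True then show ?thesis
        using \<open>drop d B @ A = B\<close> tB rotate_drop_take[of d B] by simp
    next
      case False
      have e: "length B = d + k' * d" using lB Suc by simp
      then have "k' * d = 0" using False by linarith
      then have "length B = d" using e by simp
      then show ?thesis by simp
    qed
    then have "B = rep k A" using Suc.IH[of B] lB tB by simp
    then have "r = rep (Suc k) A" using r by simp
    then show ?thesis unfolding A_def .
  qed
qed



lemma prod_lessThan_add:
  fixes m n :: nat
  shows "(\<Prod>i<m+n. f i) = (\<Prod>i<m. f i) * (\<Prod>i<n. f (m + i)::'b::comm_monoid_mult)"
  by (induction n) (simp_all add: mult.assoc)

lemma tpow_append:
  assumes "length A = a * k" "length B = b * k"
  shows "tpow k (a + b) f (A @ B) = tpow k a f A * tpow k b f B"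
proof -
  have 1: "(\<Prod>t<a. f (take k (drop (t * k) (A @ B)))) = (\<Prod>t<a. f (take k (drop (t * k) A)))"
  proof (rule prod.cong)
    fix t assume "t \<in> {..<a}"
    then have "t * k + k \<le> a * k" by (metis Suc_leI lessThan_iff mult_Suc mult_le_mono1 add.commute)
    then show "f (take k (drop (t * k) (A @ B))) = f (take k (drop (t * k) A))"
      using assms by simp
  qed simp
  have 2: "(\<Prod>t<b. f (take k (drop ((a + t) * k) (A @ B)))) = (\<Prod>t<b. f (take k (drop (t * k) B)))"
    using assms by (simp add: add_mult_distrib)
  show ?thesis
    unfolding tpow_def using assms 1 2
    by (simp add: prod_lessThan_add add_mult_distrib)
qed

lemma tpow_one[simp]: "tpow k (Suc 0) f L = (if length L = k then f L else 0)"
  by (simp add: tpow_def)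

lemma tpow_zero_fun: "0 < r \<Longrightarrow> tpow k r (\<lambda>L. 0) L = 0"
  by (auto simp add: tpow_def intro!: prod_zero)

lemma tpow_rep:
  assumes "length N = k * q"
  shows "tpow k (q * r) f (rep r N) = (tpow k q f N) ^ r"
proof (induction r)
  case 0 then show ?case by (simp add: tpow_def)
next
  case (Suc r)
  have "tpow k (q * Suc r) f (rep (Suc r) N) = tpow k (q + q * r) f (N @ rep r N)" by simp
  also have "\<dots> = tpow k q f N * tpow k (q * r) f (rep r N)"
    by (rule tpow_append) (use assms in \<open>simp_all add: mult.commute mult.left_commute\<close>)
  finally show ?case using Suc by simp
qed

lemma tpow_rep1:
  assumes "length N = k"
  shows "tpow k r f (rep r N) = (f N) ^ r"
  using tpow_rep[of N k 1 r f] assms by (simp add: tpow_one)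

lemma tpow_delta:
  assumes "length x = k"
  shows "tpow k r (\<lambda>L. if L = x then 1 else 0) M = (if M = rep r x then 1 else 0)"
proof (induction r arbitrary: M)
  case 0 then show ?case by (simp add: tpow_def)
next
  case (Suc r)
  show ?case
  proof (cases "length M = Suc r * k")
    case False
    then have "M \<noteq> rep (Suc r) x" using assms by auto
    then show ?thesis using False by (simp add: tpow_def)
  next
    case True
    have M: "M = take k M @ drop k M" by simp
    have "tpow k (1 + r) (\<lambda>L. if L = x then 1 else 0) (take k M @ drop k M)
        = tpow k 1 (\<lambda>L. if L = x then 1 else 0) (take k M) * tpow k r (\<lambda>L. if L = x then 1 else 0) (drop k M)"
      by (rule tpow_append) (use True in auto)
    then have "tpow k (Suc r) (\<lambda>L. if L = x then 1 else 0) M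
        = (if take k M = x then 1 else 0) * (if drop k M = rep r x then 1 else 0)"
      using Suc True by (simp add: tpow_one)
    also have "\<dots> = (if M = rep (Suc r) x then 1 else 0)"
      using assms True by (auto simp: append_eq_conv_conj) (metis append_take_drop_id)
    finally show ?thesis .
  qed
qed

lemma tpow_rotate:
  assumes "0 < r"
  shows "tpow k r f (rotate k L) = tpow k r f L"
proof (cases "length L = r * k")
  case False then show ?thesis by (simp add: tpow_def)
next
  case True
  obtain r' where r: "r = Suc r'" using assms by (cases r) auto
  define A where "A = take k L"
  define B where "B = drop k L"
  have L: "L = A @ B" by (simp add: A_def B_def)
  have lA: "length A = k" using True r by (simp add: A_def)
  have lB: "length B = r' * k" using True r by (simp add: B_def)
  have "rotate k L = B @ A" using rotate_append[of A B] lA L by simp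
  then have "tpow k r f (rotate k L) = tpow k (r' + 1) f (B @ A)" using r by simp
  also have "\<dots> = tpow k r' f B * tpow k 1 f A" by (rule tpow_append) (use lA lB in auto)
  also have "\<dots> = tpow k 1 f A * tpow k r' f B" by simp
  also have "\<dots> = tpow k (1 + r') f (A @ B)" by (rule tpow_append[symmetric]) (use lA lB in auto)
  finally show ?thesis using L r by simp
qed

lemma tpow_set:
  assumes "tpow k r f L \<noteq> 0" "\<And>M. f M \<noteq> 0 \<Longrightarrow> set M \<subseteq> X"
  shows "set L \<subseteq> X \<and> length L = r * k"
  using assms(1)
proof (induction r arbitrary: L)
  case 0 then show ?case by (simp add: tpow_def split: if_splits)
next
  case (Suc r)
  have len: "length L = Suc r * k" using Suc.prems by (simp add: tpow_def split: if_splits)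
  have "tpow k (1 + r) f (take k L @ drop k L) = tpow k 1 f (take k L) * tpow k r f (drop k L)"
    by (rule tpow_append) (use len in auto)
  then have "f (take k L) \<noteq> 0" "tpow k r f (drop k L) \<noteq> 0"
    using Suc.prems len by (auto simp: tpow_one)
  then have "set (take k L) \<subseteq> X" "set (drop k L) \<subseteq> X" using assms(2) Suc.IH by auto
  then have "set L \<subseteq> X" by (metis append_take_drop_id set_append Un_subset_iff)
  then show ?case using len by simp
qed


lemma fermat_int:
  fixes a :: int
  assumes "prime p"
  shows "int p dvd a ^ p - a"
proof -
  define b where "b = nat (a mod int p)"
  have p0: "p > 0" using assms prime_gt_0_nat by blast
  have ab: "[a = int b] (mod int p)" using p0 by (simp add: b_def cong_def)
  have "[b ^ p = b] (mod p)"
  proof (cases "p dvd b")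
    case True
    then have "[b = 0] (mod p)" by (simp add: cong_0_iff)
    moreover then have "[b ^ p = 0 ^ p] (mod p)" by (rule cong_pow)
    ultimately show ?thesis using p0 by (metis cong_sym cong_trans zero_power)
  next
    case False
    then have "[b ^ (p - 1) = 1] (mod p)" using fermat_theorem assms by blast
    then have "[b ^ (p - 1) * b = 1 * b] (mod p)" by (rule cong_mult) simp
    then show ?thesis using p0 by (simp add: power_Suc2[symmetric])
  qed
  then have "[int b ^ p = int b] (mod int p)" by (metis cong_int_iff of_nat_power)
  then have "[a ^ p = a] (mod int p)" using ab by (meson cong_pow cong_sym cong_trans)
  then show ?thesis by (simp add: cong_iff_dvd_diff)
qed

lemma pow_lift:
  fixes x y :: int
  assumes "prime p" "0 < t" "int p ^ t dvd x - y"
  shows "int p ^ (t + 1) dvd x ^ p - y ^ p"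
proof -
  have "int p dvd int p ^ t" using assms(2) by (simp add: dvd_power)
  then have xy: "[x = y] (mod int p)" using assms(3) by (meson cong_iff_dvd_diff cong_sym dvd_trans cong_def)
  have "[(\<Sum>i<p. y ^ (p - Suc i) * x ^ i) = (\<Sum>i<p. y ^ (p - Suc i) * y ^ i)] (mod int p)"
    by (rule cong_sum) (use xy in \<open>auto intro: cong_mult cong_pow\<close>)
  moreover have "(\<Sum>i<p. y ^ (p - Suc i) * y ^ i) = (\<Sum>i<p. y ^ (p - 1))"
    by (rule sum.cong) (auto simp: power_add[symmetric])
  ultimately have "[(\<Sum>i<p. y ^ (p - Suc i) * x ^ i) = int p * y ^ (p - 1)] (mod int p)" by simp
  then have "int p dvd (\<Sum>i<p. y ^ (p - Suc i) * x ^ i)"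
    by (metis cong_dvd_iff dvd_triv_left)
  then have "int p ^ t * int p dvd (x - y) * (\<Sum>i<p. y ^ (p - Suc i) * x ^ i)"
    using assms(3) by (rule mult_dvd_mono[rotated])
  moreover have "x ^ p - y ^ p = (x - y) * (\<Sum>i<p. y ^ (p - Suc i) * x ^ i)" by (rule power_diff_sumr2)
  moreover have "int p ^ (t + 1) = int p ^ t * int p" by simp
  ultimately show ?thesis by (simp only:)
qed

lemma dwork:
  fixes a :: int
  assumes "prime p"
  shows "int p ^ (m + 1) dvd a ^ (p ^ (m + 1)) - a ^ (p ^ m)"
proof (induction m)
  case 0 then show ?case using fermat_int[OF assms] by simp
next
  case (Suc m)
  have "int p ^ (m + 1 + 1) dvd (a ^ (p ^ (m + 1))) ^ p - (a ^ (p ^ m)) ^ p"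
    by (rule pow_lift[OF assms _ Suc]) simp
  then show ?case by (simp add: power_mult[symmetric] mult.commute)
qed


definition stab :: "nat \<Rightarrow> 'a list \<Rightarrow> int" where
  "stab K r = (\<Sum>s<K. if rotate s r = r then 1 else 0)"

lemma stab_structure:
  assumes "prime p" "length r = p ^ j"
  shows "\<exists>u\<le>j. stab (p ^ j) r = int (p ^ (j - u)) \<and> r = rep (p ^ (j - u)) (take (p ^ u) r)"
proof -
  have p0: "0 < p" using assms prime_gt_0_nat by blast
  define d where "d = (LEAST d. 0 < d \<and> rotate d r = r)"
  have ex: "0 < p ^ j \<and> rotate (p ^ j) r = r" using p0 assms by simp
  have d: "0 < d \<and> rotate d r = r" unfolding d_def by (rule LeastI[of _ "p ^ j"]) (rule ex)
  have dmin: "\<And>e. 0 < e \<Longrightarrow> e < d \<Longrightarrow> rotate e r \<noteq> r"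
    unfolding d_def using not_less_Least by blast
  have "rotate (p ^ j mod d) r = r" using rotate_mod_period[of d r "p ^ j"] d ex by simp
  then have "p ^ j mod d = 0" using dmin[of "p ^ j mod d"] d by (meson mod_less_divisor neq0_conv)
  then have "d dvd p ^ j" by auto
  then obtain u where u: "u \<le> j" "d = p ^ u" using divides_primepow_nat[OF assms(1)] by blast
  have pj: "p ^ j = p ^ (j - u) * d" using u by (simp add: power_add[symmetric])
  define h where "h = (\<lambda>s. if rotate s r = r then 1 else (0::int))"
  have per: "\<And>s. h (s + d) = h s"
    unfolding h_def using d by (simp add: rotate_rotate[symmetric] add.commute)
  have "(\<Sum>s<d. h s) = (\<Sum>s<d. if s = 0 then 1 else 0)"
    by (rule sum.cong) (use dmin in \<open>fastforce simp: h_def\<close>)+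
  also have "\<dots> = 1" using d by simp
  finally have h1: "(\<Sum>s<d. h s) = 1" .
  have "stab (p ^ j) r = (\<Sum>s<p ^ (j - u) * d. h s)" unfolding stab_def h_def using pj by simp
  also have "\<dots> = int (p ^ (j - u))" using sum_mult_periodic[of h d, OF per] h1 by simp
  finally have st: "stab (p ^ j) r = int (p ^ (j - u))" .
  have "r = rep (p ^ (j - u)) (take d r)"
    by (rule rotate_period_rep) (use d assms pj in auto)
  then show ?thesis using st u by blast
qed

definition wsingle :: "nat \<Rightarrow> ('a list \<Rightarrow> int) \<Rightarrow> nat \<Rightarrow> 'a list \<Rightarrow> int" where
  "wsingle i f = (\<lambda>k. if k = i then f else (\<lambda>L. 0))"

definition wdelta :: "'a list \<Rightarrow> 'a list \<Rightarrow> int" where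
  "wdelta x = (\<lambda>L. if L = x then 1 else 0)"

lemma Vtau_single: "Vtau i x = wsingle i (wdelta x)"
  by (simp add: Vtau_def wsingle_def wdelta_def)

lemma ghost_single:
  assumes "0 < p"
  shows "witt_ghost p n (wsingle i f) j L =
    (if j \<le> n \<and> i \<le> j then (\<Sum>s<p ^ i. tpow (p ^ i) (p ^ (j - i)) f (rotate s L)) else 0)"
proof -
  have z: "\<And>i' s. i' \<noteq> i \<Longrightarrow> i' \<le> j \<Longrightarrow> tpow (p ^ i') (p ^ (j - i')) (wsingle i f i') (rotate s L) = 0"
    using assms by (simp add: wsingle_def tpow_zero_fun)
  have "(\<Sum>i'\<le>j. \<Sum>s<p ^ i'. tpow (p ^ i') (p ^ (j - i')) (wsingle i f i') (rotate s L))
      = (\<Sum>i'\<le>j. if i' = i then (\<Sum>s<p ^ i. tpow (p ^ i) (p ^ (j - i)) f (rotate s L)) else 0)"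
    by (rule sum.cong) (auto simp: wsingle_def tpow_zero_fun assms)
  then show ?thesis by (simp add: witt_ghost_def)
qed

lemma ghost_decomp:
  assumes "0 < p"
  shows "witt_ghost p n m j L = (\<Sum>i\<le>n. witt_ghost p n (wsingle i (m i)) j L)"
proof (cases "j \<le> n")
  case False then show ?thesis using ghost_single[OF assms] by (simp add: witt_ghost_def)
next
  case True
  have "(\<Sum>i\<le>n. witt_ghost p n (wsingle i (m i)) j L)
     = (\<Sum>i\<le>n. if i \<le> j then (\<Sum>s<p ^ i. tpow (p ^ i) (p ^ (j - i)) (m i) (rotate s L)) else 0)"
    using True by (simp add: ghost_single[OF assms])
  also have "\<dots> = (\<Sum>i\<in>{..n} \<inter> {i. i \<le> j}. (\<Sum>s<p ^ i. tpow (p ^ i) (p ^ (j - i)) (m i) (rotate s L)))"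
    by (simp add: sum.inter_restrict)
  also have "{..n} \<inter> {i. i \<le> j} = {..j}" using True by auto
  finally show ?thesis using True by (simp add: witt_ghost_def)
qed

lemma ghost_delta:
  assumes "0 < p" "length x = p ^ i"
  shows "witt_ghost p n (Vtau i x) j L =
    (if j \<le> n \<and> i \<le> j then (\<Sum>s<p ^ i. if rotate s L = rep (p ^ (j - i)) x then 1 else 0) else 0)"
  unfolding Vtau_single ghost_single[OF assms(1)] wdelta_def using tpow_delta[OF assms(2)] by simp

definition inC :: "'a set \<Rightarrow> nat \<Rightarrow> nat \<Rightarrow> (nat \<Rightarrow> 'a list \<Rightarrow> int) \<Rightarrow> bool" where
  "inC X p n g \<longleftrightarrow>
    (\<forall>j L. g j L \<noteq> 0 \<longrightarrow> j \<le> n \<and> length L = p ^ j \<and> set L \<subseteq> X) \<and>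
    (\<forall>j. finite {L. g j L \<noteq> 0}) \<and>
    (\<forall>j s L. g j (rotate s L) = g j L) \<and>
    (\<forall>j u N. 0 < j \<and> j \<le> n \<and> u < j \<and> length N = p ^ u \<longrightarrow>
        int (p ^ (j - u)) dvd g j (rep (p ^ (j - u)) N) - g (j - 1) (rep (p ^ (j - 1 - u)) N))"

lemma inC_supD: "inC X p n g \<Longrightarrow> g j L \<noteq> 0 \<Longrightarrow> j \<le> n \<and> length L = p ^ j \<and> set L \<subseteq> X"
  unfolding inC_def by blast
lemma inC_finD: "inC X p n g \<Longrightarrow> finite {L. g j L \<noteq> 0}"
  unfolding inC_def by blast
lemma inC_rotD: "inC X p n g \<Longrightarrow> g j (rotate s L) = g j L"
  unfolding inC_def by blast
lemma inC_congD: "inC X p n g \<Longrightarrow> 0 < j \<Longrightarrow> j \<le> n \<Longrightarrow> u < j \<Longrightarrow> length N = p ^ u \<Longrightarrow>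
    int (p ^ (j - u)) dvd g j (rep (p ^ (j - u)) N) - g (j - 1) (rep (p ^ (j - 1 - u)) N)"
  unfolding inC_def by blast
lemma inC_I:
  assumes "\<And>j L. g j L \<noteq> 0 \<Longrightarrow> j \<le> n \<and> length L = p ^ j \<and> set L \<subseteq> X"
    "\<And>j. finite {L. g j L \<noteq> 0}" "\<And>j s L. g j (rotate s L) = g j L"
    "\<And>j u N. 0 < j \<Longrightarrow> j \<le> n \<Longrightarrow> u < j \<Longrightarrow> length N = p ^ u \<Longrightarrow>
    int (p ^ (j - u)) dvd g j (rep (p ^ (j - u)) N) - g (j - 1) (rep (p ^ (j - 1 - u)) N)"
  shows "inC X p n g"
  unfolding inC_def using assms by blast

lemma inC_zero: "inC X p n (\<lambda>j L. 0)"
  by (simp add: inC_def)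

lemma inC_add:
  assumes g: "inC X p n g" and h: "inC X p n h"
  shows "inC X p n (\<lambda>j L. g j L + h j L)"
proof (rule inC_I)
  fix j L assume "g j L + h j L \<noteq> 0"
  then have "g j L \<noteq> 0 \<or> h j L \<noteq> 0" by auto
  then show "j \<le> n \<and> length L = p ^ j \<and> set L \<subseteq> X" using inC_supD[OF g] inC_supD[OF h] by blast
next
  fix j
  have "{L. g j L + h j L \<noteq> 0} \<subseteq> {L. g j L \<noteq> 0} \<union> {L. h j L \<noteq> 0}" by auto
  then show "finite {L. g j L + h j L \<noteq> 0}" using inC_finD[OF g] inC_finD[OF h] by (meson finite_Un finite_subset)
next
  fix j s L show "g j (rotate s L) + h j (rotate s L) = g j L + h j L" using inC_rotD[OF g] inC_rotD[OF h] by simp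
next
  fix j u and N :: "'a list"
  assume a: "0 < j" "j \<le> n" "u < j" "length N = p ^ u"
  have "int (p ^ (j - u)) dvd (g j (rep (p ^ (j - u)) N) - g (j - 1) (rep (p ^ (j - 1 - u)) N)) +
      (h j (rep (p ^ (j - u)) N) - h (j - 1) (rep (p ^ (j - 1 - u)) N))"
    by (rule dvd_add) (rule inC_congD[OF _ a]; fact)+
  then show "int (p ^ (j - u)) dvd (g j (rep (p ^ (j - u)) N) + h j (rep (p ^ (j - u)) N)) -
       (g (j - 1) (rep (p ^ (j - 1 - u)) N) + h (j - 1) (rep (p ^ (j - 1 - u)) N))"
    by (simp add: algebra_simps)
qed

lemma inC_smult:
  assumes g: "inC X p n g"
  shows "inC X p n (\<lambda>j L. c * g j L)"
proof (rule inC_I)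
  fix j L assume "c * g j L \<noteq> 0"
  then have "g j L \<noteq> 0" by auto
  then show "j \<le> n \<and> length L = p ^ j \<and> set L \<subseteq> X" using inC_supD[OF g] by blast
next
  fix j
  have "{L. c * g j L \<noteq> 0} \<subseteq> {L. g j L \<noteq> 0}" by auto
  then show "finite {L. c * g j L \<noteq> 0}" using inC_finD[OF g] by (meson finite_subset)
next
  fix j s L show "c * g j (rotate s L) = c * g j L" using inC_rotD[OF g] by simp
next
  fix j u and N :: "'a list"
  assume a: "0 < j" "j \<le> n" "u < j" "length N = p ^ u"
  have "int (p ^ (j - u)) dvd c * (g j (rep (p ^ (j - u)) N) - g (j - 1) (rep (p ^ (j - 1 - u)) N))"
    by (rule dvd_mult) (rule inC_congD[OF g a])
  then show "int (p ^ (j - u)) dvd c * g j (rep (p ^ (j - u)) N) - c * g (j - 1) (rep (p ^ (j - 1 - u)) N)"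
    by (simp add: algebra_simps)
qed

lemma inC_diff:
  assumes "inC X p n g" "inC X p n h"
  shows "inC X p n (\<lambda>j L. g j L - h j L)"
  using inC_add[OF assms(1) inC_smult[OF assms(2), of "-1"]] by simp

lemma inC_sum:
  assumes "finite I" "\<And>i. i \<in> I \<Longrightarrow> inC X p n (h i)"
  shows "inC X p n (\<lambda>j L. \<Sum>i\<in>I. h i j L)"
  using assms
proof (induction I rule: finite_induct)
  case empty then show ?case by (simp add: inC_zero)
next
  case (insert x F)
  then show ?case using inC_add[of X p n "h x" "\<lambda>j L. \<Sum>i\<in>F. h i j L"] by simp
qed


lemma tensorD:
  assumes "f \<in> tensor_pow_grp X k"
  shows "\<And>M. f M \<noteq> 0 \<Longrightarrow> length M = k \<and> set M \<subseteq> X" "finite {M. f M \<noteq> 0}"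
  using assms unfolding tensor_pow_grp_def by auto

lemma G_nz:
  assumes "0 < p" "witt_ghost p n (wsingle i f) j L \<noteq> 0"
  shows "j \<le> n \<and> i \<le> j \<and> (\<exists>s. tpow (p ^ i) (p ^ (j - i)) f (rotate s L) \<noteq> 0)"
proof -
  have c: "j \<le> n \<and> i \<le> j" using assms by (auto simp: ghost_single split: if_splits)
  then have "(\<Sum>s<p ^ i. tpow (p ^ i) (p ^ (j - i)) f (rotate s L)) \<noteq> 0"
    using assms by (simp add: ghost_single)
  then obtain s where "tpow (p ^ i) (p ^ (j - i)) f (rotate s L) \<noteq> 0"
    by (meson sum.not_neutral_contains_not_neutral)
  then show ?thesis using c by blast
qed

lemma pow_split: "a \<le> b \<Longrightarrow> (p::nat) ^ (b - a) * p ^ a = p ^ b"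
  by (simp add: power_add[symmetric])

lemma G_inC:
  assumes p: "prime p" and iv: "i \<le> n" and f: "f \<in> tensor_pow_grp X (p ^ i)"
  shows "inC X p n (witt_ghost p n (wsingle i f))"
proof -
  have p0: "0 < p" using p prime_gt_0_nat by blast
  note fsup = tensorD(1)[OF f] and ffin = tensorD(2)[OF f]
  define G where "G = witt_ghost p n (wsingle i f)"
  have Gf: "G j L = (if j \<le> n \<and> i \<le> j then (\<Sum>s<p ^ i. tpow (p ^ i) (p ^ (j - i)) f (rotate s L)) else 0)"
    for j L unfolding G_def by (rule ghost_single[OF p0])
  show ?thesis unfolding G_def[symmetric]
  proof (rule inC_I)
    fix j L assume "G j L \<noteq> 0"
    then obtain s where c: "j \<le> n" "i \<le> j" and t: "tpow (p ^ i) (p ^ (j - i)) f (rotate s L) \<noteq> 0"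
      using G_nz[OF p0] unfolding G_def by blast
    have "set (rotate s L) \<subseteq> X \<and> length (rotate s L) = p ^ (j - i) * p ^ i"
      by (rule tpow_set[OF t]) (use fsup in blast)
    then show "j \<le> n \<and> length L = p ^ j \<and> set L \<subseteq> X" using c pow_split[of i j p] by simp
  next
    fix j
    define Y where "Y = \<Union> (set ` {M. f M \<noteq> 0})"
    have fY: "finite Y" unfolding Y_def using ffin by blast
    have "{L. G j L \<noteq> 0} \<subseteq> {xs. set xs \<subseteq> Y \<and> length xs = p ^ j}"
    proof
      fix L assume "L \<in> {L. G j L \<noteq> 0}"
      then obtain s where c: "j \<le> n" "i \<le> j" and t: "tpow (p ^ i) (p ^ (j - i)) f (rotate s L) \<noteq> 0"
        using G_nz[OF p0] unfolding G_def by blast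
      have "set (rotate s L) \<subseteq> Y \<and> length (rotate s L) = p ^ (j - i) * p ^ i"
        by (rule tpow_set[OF t]) (auto simp: Y_def)
      then show "L \<in> {xs. set xs \<subseteq> Y \<and> length xs = p ^ j}" using c pow_split[of i j p] by simp
    qed
    then show "finite {L. G j L \<noteq> 0}" using finite_lists_length_eq[OF fY] finite_subset by blast
  next
    fix j s L
    show "G j (rotate s L) = G j L"
    proof (cases "j \<le> n \<and> i \<le> j")
      case False then show ?thesis by (simp only: Gf if_not_P[OF False] if_False)
    next
      case True
      define h where "h = (\<lambda>s. tpow (p ^ i) (p ^ (j - i)) f (rotate s L))"
      have per: "h (s + p ^ i) = h s" for s
      proof -
        have "rotate (s + p ^ i) L = rotate (p ^ i) (rotate s L)" by (simp add: rotate_rotate add.commute)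
        then show ?thesis unfolding h_def using tpow_rotate[of "p ^ (j - i)" "p ^ i" f] p0 by simp
      qed
      have "G j (rotate s L) = (\<Sum>t<p ^ i. h (t + s))"
        using True by (simp add: Gf h_def rotate_rotate)
      also have "\<dots> = (\<Sum>t<p ^ i. h t)" by (rule sum_shift_periodic) (rule per)
      finally show ?thesis using True by (simp add: Gf h_def)
    qed
  next
    fix j u and N :: "'a list"
    assume a: "0 < j" "j \<le> n" "u < j" "length N = p ^ u"
    define A where "A = rep (p ^ (j - u)) N"
    define M where "M = rep (p ^ (j - 1 - u)) N"
    have rN: "rotate (s + p ^ u) N = rotate s N" for s
      using a(4) by (simp add: rotate_rotate[symmetric] add.commute)
    show "int (p ^ (j - u)) dvd G j A - G (j - 1) M"
      unfolding A_def[symmetric] M_def[symmetric]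
    proof (cases "i \<le> j")
      case False
      then have "\<not> (i \<le> j - 1)" "\<not> (i \<le> j)" by auto
      then show ?thesis by (simp add: Gf)
    next
      case True
      show ?thesis
      proof (cases "i = j")
        case True
        have lA: "length (rotate s A) = p ^ j" for s
          using a pow_split[of u j p] by (simp add: A_def)
        define h where "h = (\<lambda>s. f (rotate s A))"
        have per: "h (s + p ^ u) = h s" for s
          unfolding h_def A_def by (simp add: rotate_rep rN)
        have "G j A = (\<Sum>s<p ^ (j - u) * p ^ u. h s)"
          using True a lA pow_split[of u j p] by (simp add: Gf h_def)
        also have "\<dots> = of_nat (p ^ (j - u)) * (\<Sum>s<p ^ u. h s)"
          by (rule sum_mult_periodic) (rule per)
        finally have "G j A = int (p ^ (j - u)) * (\<Sum>s<p ^ u. h s)" by simp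
        moreover have "\<not> (i \<le> j - 1)" using True a(1) by simp
        then have "G (j - 1) M = 0" by (simp add: Gf)
        ultimately show ?thesis by simp
      next
        case False
        with True have ij: "i < j" by simp
        define D where "D = (\<lambda>s. tpow (p ^ i) (p ^ (j - i)) f (rotate s A)
                                 - tpow (p ^ i) (p ^ (j - 1 - i)) f (rotate s M))"
        have GD: "G j A - G (j - 1) M = (\<Sum>s<p ^ i. D s)"
        proof -
          have "j - 1 \<le> n" "i \<le> j - 1" "j \<le> n" "i \<le> j" using ij a by auto
          then show ?thesis by (simp add: Gf D_def sum_subtractf)
        qed
        have DN: "D s = tpow (p ^ i) (p ^ (j - i)) f (rep (p ^ (j - u)) (rotate s N))
                       - tpow (p ^ i) (p ^ (j - 1 - i)) f (rep (p ^ (j - 1 - u)) (rotate s N))" for s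
          by (simp add: D_def A_def M_def rotate_rep)
        have lN: "length (rotate s N) = p ^ u" for s using a by simp
        show ?thesis
        proof (cases "u \<le> i")
          case True
          define a where "a = (\<lambda>s. f (rep (p ^ (i - u)) (rotate s N)))"
          have la: "length (rep (p ^ (i - u)) (rotate s N)) = p ^ i" for s
            using lN True pow_split[of u i p] by simp
          have e1: "p ^ (j - u) = p ^ (j - i) * p ^ (i - u)"
            using True ij by (simp add: power_add[symmetric])
          have e2: "p ^ (j - 1 - u) = p ^ (j - 1 - i) * p ^ (i - u)"
            using True ij by (simp add: power_add[symmetric])
          have Da: "D s = a s ^ (p ^ (j - i)) - a s ^ (p ^ (j - 1 - i))" for s
            unfolding DN e1 e2 rep_rep[symmetric] a_def
            using tpow_rep1[OF la] by simp
          have perD: "D (s + p ^ u) = D s" for s unfolding Da a_def by (simp add: rN)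
          have "(\<Sum>s<p ^ i. D s) = (\<Sum>s<p ^ (i - u) * p ^ u. D s)" using True pow_split[of u i p] by simp
          also have "\<dots> = of_nat (p ^ (i - u)) * (\<Sum>s<p ^ u. D s)"
            by (rule sum_mult_periodic) (rule perD)
          finally have sD: "(\<Sum>s<p ^ i. D s) = int (p ^ (i - u)) * (\<Sum>s<p ^ u. D s)" by simp
          have jm: "j - i = (j - 1 - i) + 1" using ij by simp
          have "int p ^ (j - i) dvd D s" for s
            unfolding Da using dwork[OF p, of "j - 1 - i" "a s"] jm by simp
          then have h1: "int p ^ (j - i) dvd (\<Sum>s<p ^ u. D s)" by (simp add: dvd_sum)
          have h2: "int p ^ (i - u) * int p ^ (j - i) dvd int p ^ (i - u) * (\<Sum>s<p ^ u. D s)"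
            using h1 by (rule mult_dvd_mono[OF dvd_refl])
          have h3: "int p ^ (i - u) * int p ^ (j - i) = int p ^ (j - u)"
            using True ij by (simp add: power_add[symmetric])
          have "int p ^ (j - u) dvd int p ^ (i - u) * (\<Sum>s<p ^ u. D s)" using h2 unfolding h3 .
          then show ?thesis using GD sD by simp
        next
          case False
          define Q where "Q = (\<lambda>s. tpow (p ^ i) (p ^ (u - i)) f (rotate s N))"
          have lN': "length (rotate s N) = p ^ i * p ^ (u - i)" for s
            using lN False pow_split[of i u p] by (simp add: mult.commute)
          have e1: "p ^ (j - i) = p ^ (u - i) * p ^ (j - u)"
            using False a by (simp add: power_add[symmetric])
          have e2: "p ^ (j - 1 - i) = p ^ (u - i) * p ^ (j - 1 - u)"
            using False a by (simp add: power_add[symmetric])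
          have DQ: "D s = Q s ^ (p ^ (j - u)) - Q s ^ (p ^ (j - 1 - u))" for s
            unfolding DN e1 e2 Q_def using tpow_rep[OF lN'] by simp
          have jm: "j - u = (j - 1 - u) + 1" using a by simp
          have "int p ^ (j - u) dvd D s" for s
            unfolding DQ using dwork[OF p, of "j - 1 - u" "Q s"] jm by simp
          then have "int (p ^ (j - u)) dvd (\<Sum>s<p ^ i. D s)" by (simp add: dvd_sum)
          then show ?thesis using GD by simp
        qed
      qed
    qed
  qed
qed


lemma orbit_O1:
  assumes "orbit_reps X p n R" "j \<le> n" "r \<in> R j"
  shows "length r = p ^ j \<and> set r \<subseteq> X"
  using assms unfolding orbit_reps_def by blast

lemma orbit_O4:
  assumes R: "orbit_reps X p n R" and j: "j \<le> n" and r: "r \<in> R j" and r': "r' \<in> R j"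
    and e: "rotate t r = rotate t' r'"
  shows "r = r'"
proof -
  have l: "length (rotate t r) = p ^ j \<and> set (rotate t r) \<subseteq> X" using orbit_O1[OF R j r] by simp
  have "\<exists>!r0\<in>R j. \<exists>s. rotate t r = rotate s r0" using R j l unfolding orbit_reps_def by blast
  then show ?thesis using r r' e by blast
qed

lemma orbit_O2:
  assumes R: "orbit_reps X p n R" and j: "j \<le> n" and r: "r \<in> R j" and r': "rotate s r \<in> R j"
  shows "rotate s r = r"
  using orbit_O4[OF R j r r', of s 0] by simp

lemma orbit_O3:
  assumes R: "orbit_reps X p n R" and j: "j \<le> n" and L: "length L = p ^ j" "set L \<subseteq> X"
  shows "\<exists>r\<in>R j. \<exists>t. L = rotate t r"
  using R j L unfolding orbit_reps_def by blast

lemma V_level: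
  assumes "0 < p" "length r = p ^ j" "j \<le> n"
  shows "witt_ghost p n (Vtau j r) j L = (\<Sum>s<p ^ j. if rotate s L = r then 1 else 0)"
  using assms by (simp add: ghost_delta)

lemma V_below:
  assumes "0 < p" "length r = p ^ i" "k < i"
  shows "witt_ghost p n (Vtau i r) k L = 0"
  using assms by (simp add: ghost_delta)

lemma G_level:
  assumes "0 < p" "j \<le> n" "\<And>L. f L \<noteq> 0 \<Longrightarrow> length L = p ^ j"
  shows "witt_ghost p n (wsingle j f) j L = (\<Sum>s<p ^ j. f (rotate s L))"
proof -
  have e: "tpow (p ^ j) (p ^ (j - j)) f M = f M" for M
  proof -
    have "p ^ (j - j) = Suc 0" by simp
    then show ?thesis using assms(3)[of M] by (simp only: tpow_one) auto
  qed
  show ?thesis unfolding ghost_single[OF assms(1)] e using assms(2) by simp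
qed

lemma G_below:
  assumes "0 < p" "k < i"
  shows "witt_ghost p n (wsingle i f) k L = 0"
  using assms by (simp add: ghost_single)

lemma G_zero:
  assumes "0 < p"
  shows "witt_ghost p n (wsingle i (\<lambda>L. 0)) k L = 0"
  using assms by (simp add: ghost_single tpow_zero_fun)


lemma step_lemma:
  assumes p: "prime p" and R: "orbit_reps X p n R" and g: "inC X p n g" and j: "j \<le> n"
    and van: "\<And>k L. k < j \<Longrightarrow> g k L = 0"
  shows "\<exists>f. f \<in> tensor_pow_grp X (p ^ j) \<and> (\<forall>L. f L \<noteq> 0 \<longrightarrow> L \<in> R j) \<and>
              (\<forall>L. g j L = (\<Sum>s<p ^ j. f (rotate s L)))"
proof -
  have p0: "0 < p" using p prime_gt_0_nat by blast
  define F where "F = {r \<in> R j. g j r \<noteq> 0}"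
  define f where "f = (\<lambda>L. if L \<in> F then g j L div stab (p ^ j) L else 0)"
  have fR: "f L \<noteq> 0 \<Longrightarrow> L \<in> R j" for L unfolding f_def F_def by (auto split: if_splits)
  have ften: "f \<in> tensor_pow_grp X (p ^ j)"
  proof -
    have "{L. f L \<noteq> 0} \<subseteq> {L. g j L \<noteq> 0}" unfolding f_def F_def by auto
    then have "finite {L. f L \<noteq> 0}" using inC_finD[OF g] finite_subset by blast
    then show ?thesis unfolding tensor_pow_grp_def using fR orbit_O1[OF R j] by blast
  qed
  have dv: "stab (p ^ j) r0 dvd g j r0" if r0: "r0 \<in> R j" for r0
  proof -
    have l0: "length r0 = p ^ j" using orbit_O1[OF R j r0] by simp
    obtain u where u: "u \<le> j" "stab (p ^ j) r0 = int (p ^ (j - u))"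
      and r0e0: "r0 = rep (p ^ (j - u)) (take (p ^ u) r0)"
      using stab_structure[OF p l0] by blast
    obtain N where N: "N = take (p ^ u) r0" by blast
    have r0e: "r0 = rep (p ^ (j - u)) N" using r0e0 N by simp
    show ?thesis
    proof (cases "u = j")
      case True then show ?thesis using u by simp
    next
      case False
      then have uj: "u < j" using u by simp
      have "p ^ u \<le> p ^ j" using uj p0 by (simp add: power_increasing)
      then have lt: "length N = p ^ u" using l0 N by (simp add: min_def)
      have "int (p ^ (j - u)) dvd g j (rep (p ^ (j - u)) N) - g (j - 1) (rep (p ^ (j - 1 - u)) N)"
        by (rule inC_congD[OF g _ j uj lt]) (use uj in simp)
      moreover have "g (j - 1) (rep (p ^ (j - 1 - u)) N) = 0" using van uj by simp
      ultimately have "int (p ^ (j - u)) dvd g j (rep (p ^ (j - u)) N)" by simp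
      then show ?thesis using u(2) r0e by simp
    qed
  qed
  have val: "g j L = (\<Sum>s<p ^ j. f (rotate s L))" for L
  proof (cases "length L = p ^ j \<and> set L \<subseteq> X")
    case True
    then obtain r0 t where r0: "r0 \<in> R j" and L: "L = rotate t r0" using orbit_O3[OF R j] by blast
    have l0: "length r0 = p ^ j" using orbit_O1[OF R j r0] by simp
    have per: "f (rotate (s + p ^ j) r0) = f (rotate s r0)" for s
    proof -
      have "rotate (s + p ^ j) r0 = rotate s (rotate (p ^ j) r0)" by (simp add: rotate_rotate)
      also have "\<dots> = rotate s r0" using l0 by simp
      finally show ?thesis by simp
    qed
    have "(\<Sum>s<p ^ j. f (rotate s L)) = (\<Sum>s<p ^ j. f (rotate (s + t) r0))"
      unfolding L by (simp add: rotate_rotate)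
    also have "\<dots> = (\<Sum>s<p ^ j. f (rotate s r0))"
      using sum_shift_periodic[of "\<lambda>s. f (rotate s r0)" "p ^ j" t] per by simp
    also have "\<dots> = (\<Sum>s<p ^ j. f r0 * (if rotate s r0 = r0 then 1 else 0))"
    proof (rule sum.cong)
      fix s
      show "f (rotate s r0) = f r0 * (if rotate s r0 = r0 then 1 else 0)"
      proof (cases "f (rotate s r0) = 0")
        case True
        then show ?thesis by (cases "rotate s r0 = r0") auto
      next
        case False
        then have "rotate s r0 = r0" using fR orbit_O2[OF R j r0] by blast
        then show ?thesis by simp
      qed
    qed simp
    also have "\<dots> = f r0 * stab (p ^ j) r0" by (simp add: stab_def sum_distrib_left)
    also have "\<dots> = g j r0"
    proof (cases "g j r0 = 0")
      case True then show ?thesis by (simp add: f_def F_def)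
    next
      case False
      then have "f r0 = g j r0 div stab (p ^ j) r0" using r0 by (simp add: f_def F_def)
      then show ?thesis using dv[OF r0] by simp
    qed
    also have "\<dots> = g j L" unfolding L by (simp add: inC_rotD[OF g])
    finally show ?thesis by simp
  next
    case False
    then have "g j L = 0" using inC_supD[OF g] by blast
    moreover have "f (rotate s L) = 0" for s
    proof (rule ccontr)
      assume "f (rotate s L) \<noteq> 0"
      then have "rotate s L \<in> R j" by (rule fR)
      then show False using orbit_O1[OF R j] False by (metis length_rotate set_rotate)
    qed
    ultimately show ?thesis by simp
  qed
  show ?thesis using ften fR val by blast
qed


lemma coeffsD:
  assumes "c \<in> coeffs n R"
  shows "finite {k. c k \<noteq> 0}" "\<And>i r. c (i, r) \<noteq> 0 \<Longrightarrow> i \<le> n \<and> r \<in> R i"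
  using assms unfolding coeffs_def by auto

lemma lincomb_eq:
  assumes "finite K" "{k. c k \<noteq> 0} \<subseteq> K"
  shows "lincomb p n c j L = (\<Sum>k\<in>K. c k * witt_ghost p n (Vtau (fst k) (snd k)) j L)"
  unfolding lincomb_def by (rule sum.mono_neutral_left) (use assms in auto)

lemma lincomb_add:
  assumes "finite {k. c1 k \<noteq> 0}" "finite {k. c2 k \<noteq> 0}"
  shows "lincomb p n (\<lambda>k. c1 k + c2 k) j L = lincomb p n c1 j L + lincomb p n c2 j L"
proof -
  define K where "K = {k. c1 k \<noteq> 0} \<union> {k. c2 k \<noteq> 0}"
  have fK: "finite K" using assms by (simp add: K_def)
  have "lincomb p n (\<lambda>k. c1 k + c2 k) j L = (\<Sum>k\<in>K. (c1 k + c2 k) * witt_ghost p n (Vtau (fst k) (snd k)) j L)"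
    by (rule lincomb_eq[OF fK]) (auto simp: K_def)
  also have "\<dots> = (\<Sum>k\<in>K. c1 k * witt_ghost p n (Vtau (fst k) (snd k)) j L) +
                  (\<Sum>k\<in>K. c2 k * witt_ghost p n (Vtau (fst k) (snd k)) j L)"
    by (simp add: distrib_right sum.distrib)
  also have "\<dots> = lincomb p n c1 j L + lincomb p n c2 j L"
    using lincomb_eq[OF fK, of c1] lincomb_eq[OF fK, of c2] by (simp add: K_def)
  finally show ?thesis .
qed

lemma lincomb_inC:
  assumes p: "prime p" and R: "orbit_reps X p n R" and c: "c \<in> coeffs n R"
  shows "inC X p n (lincomb p n c)"
proof -
  have "inC X p n (\<lambda>j L. \<Sum>k\<in>{k. c k \<noteq> 0}. c k * witt_ghost p n (Vtau (fst k) (snd k)) j L)"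
  proof (rule inC_sum)
    show "finite {k. c k \<noteq> 0}" using coeffsD(1)[OF c] .
  next
    fix k assume "k \<in> {k. c k \<noteq> 0}"
    then obtain i r where k: "k = (i, r)" "c (i, r) \<noteq> 0" by (cases k) auto
    then have ir: "i \<le> n" "r \<in> R i" using coeffsD(2)[OF c] by auto
    have "wdelta r \<in> tensor_pow_grp X (p ^ i)"
      using orbit_O1[OF R ir] unfolding tensor_pow_grp_def wdelta_def by auto
    then have hh: "inC X p n (witt_ghost p n (wsingle i (wdelta r)))" by (rule G_inC[OF p ir(1)])
    show "inC X p n (\<lambda>j L. c k * witt_ghost p n (Vtau (fst k) (snd k)) j L)"
      using inC_smult[OF hh, of "c k"] k by (simp add: Vtau_single)
  qed
  then show ?thesis unfolding lincomb_def by simp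
qed


lemma coeffs_add:
  assumes "c1 \<in> coeffs n R" "c2 \<in> coeffs n R"
  shows "(\<lambda>k. c1 k + c2 k) \<in> coeffs n R"
proof -
  have "{k. c1 k + c2 k \<noteq> 0} \<subseteq> {k. c1 k \<noteq> 0} \<union> {k. c2 k \<noteq> 0}" by auto
  then have "finite {k. c1 k + c2 k \<noteq> 0}" using coeffsD(1)[OF assms(1)] coeffsD(1)[OF assms(2)]
    by (meson finite_UnI finite_subset)
  moreover have "i \<le> n \<and> r \<in> R i" if "c1 (i, r) + c2 (i, r) \<noteq> 0" for i r
  proof -
    have "c1 (i, r) \<noteq> 0 \<or> c2 (i, r) \<noteq> 0" using that by auto
    then show ?thesis using coeffsD(2)[OF assms(1)] coeffsD(2)[OF assms(2)] by blast
  qed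
  ultimately show ?thesis unfolding coeffs_def by blast
qed

lemma single_coeff:
  assumes p: "prime p" and R: "orbit_reps X p n R" and jn: "j \<le> n"
    and f: "f \<in> tensor_pow_grp X (p ^ j)" and fR: "\<And>L. f L \<noteq> 0 \<Longrightarrow> L \<in> R j"
  defines "cj \<equiv> (\<lambda>k. if fst k = j then f (snd k) else (0::int))"
  shows "cj \<in> coeffs n R" "\<And>k L. k < j \<Longrightarrow> lincomb p n cj k L = 0"
    "\<And>L. lincomb p n cj j L = (\<Sum>s<p ^ j. f (rotate s L))"
proof -
  have p0: "0 < p" using p prime_gt_0_nat by blast
  define FS where "FS = {L. f L \<noteq> 0}"
  have fFS: "finite FS" using tensorD(2)[OF f] by (simp add: FS_def)
  have lFS: "r \<in> FS \<Longrightarrow> length r = p ^ j" for r using tensorD(1)[OF f] by (auto simp: FS_def)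
  have supp: "{k. cj k \<noteq> 0} = Pair j ` FS" by (auto simp: cj_def FS_def)
  show "cj \<in> coeffs n R"
    unfolding coeffs_def using supp fFS fR jn by (auto simp: cj_def)
  have hform: "lincomb p n cj k L = (\<Sum>r\<in>FS. f r * witt_ghost p n (Vtau j r) k L)" for k L
  proof -
    have "lincomb p n cj k L = (\<Sum>q\<in>Pair j ` FS. cj q * witt_ghost p n (Vtau (fst q) (snd q)) k L)"
      unfolding lincomb_def supp ..
    also have "\<dots> = (\<Sum>r\<in>FS. f r * witt_ghost p n (Vtau j r) k L)"
      by (subst sum.reindex) (auto simp: inj_on_def cj_def)
    finally show ?thesis .
  qed
  show "lincomb p n cj k L = 0" if "k < j" for k L
    unfolding hform using V_below[OF p0 lFS that] by simp
  show "lincomb p n cj j L = (\<Sum>s<p ^ j. f (rotate s L))" for L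
  proof -
    have "lincomb p n cj j L = (\<Sum>r\<in>FS. f r * (\<Sum>s<p ^ j. if rotate s L = r then 1 else 0))"
      unfolding hform by (rule sum.cong) (auto simp: V_level[OF p0 lFS jn])
    also have "\<dots> = (\<Sum>r\<in>FS. \<Sum>s<p ^ j. if r = rotate s L then f r else 0)"
      by (rule sum.cong) (auto simp: sum_distrib_left intro!: sum.cong)
    also have "\<dots> = (\<Sum>s<p ^ j. \<Sum>r\<in>FS. if r = rotate s L then f r else 0)"
      by (rule sum.swap)
    also have "\<dots> = (\<Sum>s<p ^ j. f (rotate s L))"
    proof (rule sum.cong[OF refl])
      fix s
      show "(\<Sum>r\<in>FS. if r = rotate s L then f r else 0) = f (rotate s L)"
        by (subst sum.delta[OF fFS]) (auto simp: FS_def)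
    qed
    finally show ?thesis .
  qed
qed

lemma P1:
  assumes p: "prime p" and R: "orbit_reps X p n R" and jle: "j \<le> Suc n"
  shows "\<forall>g. inC X p n g \<and> (\<forall>k<j. \<forall>L. g k L = 0) \<longrightarrow> (\<exists>c\<in>coeffs n R. lincomb p n c = g)"
  using jle
proof (induction j rule: inc_induct)
  case base
  show ?case
  proof (intro allI impI)
    fix g assume a: "inC X p n g \<and> (\<forall>k<Suc n. \<forall>L. g k L = 0)"
    have g0: "g = (\<lambda>k L. 0)"
    proof (intro ext)
      fix k L show "g k L = 0"
      proof (cases "k < Suc n")
        case True then show ?thesis using a by blast
      next
        case False then show ?thesis using inC_supD[of X p n g k L] a by fastforce
      qed
    qed
    have "(\<lambda>k. 0::int) \<in> coeffs n R" by (simp add: coeffs_def)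
    moreover have "lincomb p n (\<lambda>k. 0) = g" using g0 by (simp add: lincomb_def)
    ultimately show "\<exists>c\<in>coeffs n R. lincomb p n c = g" by blast
  qed
next
  case (step j)
  have jn: "j \<le> n" using step.hyps by simp
  show ?case
  proof (intro allI impI)
    fix g assume a: "inC X p n g \<and> (\<forall>k<j. \<forall>L. g k L = 0)"
    obtain f where f: "f \<in> tensor_pow_grp X (p ^ j)" and fR: "\<forall>L. f L \<noteq> 0 \<longrightarrow> L \<in> R j"
      and fv: "\<forall>L. g j L = (\<Sum>s<p ^ j. f (rotate s L))"
      using step_lemma[OF p R conjunct1[OF a] jn] a by blast
    define cj where "cj = (\<lambda>k. if fst k = j then f (snd k) else (0::int))"
    note sc = single_coeff[OF p R jn f, folded cj_def]
    have cjc: "cj \<in> coeffs n R" using sc(1) fR by blast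
    have hb: "k < j \<Longrightarrow> lincomb p n cj k L = 0" for k L using sc(2) fR by blast
    have hj: "lincomb p n cj j L = (\<Sum>s<p ^ j. f (rotate s L))" for L using sc(3) fR by blast
    have hC: "inC X p n (lincomb p n cj)" by (rule lincomb_inC[OF p R cjc])
    define g' where "g' = (\<lambda>k L. g k L - lincomb p n cj k L)"
    have g'C: "inC X p n g'" unfolding g'_def by (rule inC_diff[OF conjunct1[OF a] hC])
    have g'v: "\<forall>k<Suc j. \<forall>L. g' k L = 0"
    proof (intro allI impI)
      fix k L assume "k < Suc j"
      then consider "k < j" | "k = j" by linarith
      then show "g' k L = 0"
      proof cases
        case 1 then show ?thesis using a hb by (simp add: g'_def)
      next
        case 2 then show ?thesis using fv hj by (simp add: g'_def)
      qed
    qed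
    obtain c' where c': "c' \<in> coeffs n R" "lincomb p n c' = g'" using step.IH g'C g'v by blast
    have "lincomb p n (\<lambda>k. c' k + cj k) = g"
    proof (intro ext)
      fix k L
      have "lincomb p n (\<lambda>k. c' k + cj k) k L = lincomb p n c' k L + lincomb p n cj k L"
        by (rule lincomb_add) (use coeffsD(1) c'(1) cjc in blast)+
      then show "lincomb p n (\<lambda>k. c' k + cj k) k L = g k L" using c'(2) by (simp add: g'_def)
    qed
    then show "\<exists>c\<in>coeffs n R. lincomb p n c = g" using coeffs_add[OF c'(1) cjc] by blast
  qed
qed


lemma ghost_zero_seq:
  assumes "0 < p"
  shows "witt_ghost p n (\<lambda>k L. 0) = (\<lambda>k L. 0)"
proof (intro ext)
  fix k L
  have "witt_ghost p n (\<lambda>k L. 0) k L = (\<Sum>i\<le>n. witt_ghost p n (wsingle i (\<lambda>L. 0)) k L)"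
    by (rule ghost_decomp[OF assms])
  also have "\<dots> = 0" by (simp add: G_zero[OF assms])
  finally show "witt_ghost p n (\<lambda>k L. 0) k L = 0" .
qed

lemma ghost_update:
  assumes p0: "0 < p" and jn: "j \<le> n" and mj: "m j = (\<lambda>L. 0)"
  shows "witt_ghost p n (m(j := f)) k L = witt_ghost p n (wsingle j f) k L + witt_ghost p n m k L"
proof -
  have fin: "finite {..n}" and jin: "j \<in> {..n}" using jn by auto
  have "witt_ghost p n (m(j := f)) k L = (\<Sum>i\<le>n. witt_ghost p n (wsingle i ((m(j := f)) i)) k L)"
    by (rule ghost_decomp[OF p0])
  also have "\<dots> = witt_ghost p n (wsingle j f) k L + (\<Sum>i\<in>{..n} - {j}. witt_ghost p n (wsingle i (m i)) k L)"
    by (subst sum.remove[OF fin jin]) simp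
  finally have 1: "witt_ghost p n (m(j := f)) k L = witt_ghost p n (wsingle j f) k L + (\<Sum>i\<in>{..n} - {j}. witt_ghost p n (wsingle i (m i)) k L)" .
  have "witt_ghost p n m k L = (\<Sum>i\<le>n. witt_ghost p n (wsingle i (m i)) k L)"
    by (rule ghost_decomp[OF p0])
  also have "\<dots> = witt_ghost p n (wsingle j (m j)) k L + (\<Sum>i\<in>{..n} - {j}. witt_ghost p n (wsingle i (m i)) k L)"
    by (rule sum.remove[OF fin jin])
  finally have 2: "witt_ghost p n m k L = (\<Sum>i\<in>{..n} - {j}. witt_ghost p n (wsingle i (m i)) k L)"
    using mj G_zero[OF p0] by simp
  show ?thesis using 1 2 by simp
qed


lemma P2:
  assumes p: "prime p" and R: "orbit_reps X p n R" and jle: "j \<le> Suc n"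
  shows "\<forall>g. inC X p n g \<and> (\<forall>k<j. \<forall>L. g k L = 0) \<longrightarrow>
           (\<exists>m\<in>witt_seqs X p n. (\<forall>k<j. m k = (\<lambda>L. 0)) \<and> witt_ghost p n m = g)"
  using jle
proof (induction j rule: inc_induct)
  have p0: "0 < p" using p prime_gt_0_nat by blast
  case base
  show ?case
  proof (intro allI impI)
    fix g assume a: "inC X p n g \<and> (\<forall>k<Suc n. \<forall>L. g k L = 0)"
    have g0: "g = (\<lambda>k L. 0)"
    proof (intro ext)
      fix k L show "g k L = 0"
      proof (cases "k < Suc n")
        case True then show ?thesis using a by blast
      next
        case False then show ?thesis using inC_supD[of X p n g k L] a by fastforce
      qed
    qed
    have z: "(\<lambda>k L. 0::int) \<in> witt_seqs X p n" unfolding witt_seqs_def tensor_pow_grp_def by simp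
    have w: "witt_ghost p n (\<lambda>k L. 0) = g" using g0 ghost_zero_seq[OF p0] by simp
    show "\<exists>m\<in>witt_seqs X p n. (\<forall>k<Suc n. m k = (\<lambda>L. 0)) \<and> witt_ghost p n m = g"
      by (rule bexI[of _ "\<lambda>k L. 0"]) (use z w in simp_all)
  qed
next
  have p0: "0 < p" using p prime_gt_0_nat by blast
  case (step j)
  have jn: "j \<le> n" using step.hyps by simp
  show ?case
  proof (intro allI impI)
    fix g assume a: "inC X p n g \<and> (\<forall>k<j. \<forall>L. g k L = 0)"
    obtain f where f: "f \<in> tensor_pow_grp X (p ^ j)"
      and fv: "\<forall>L. g j L = (\<Sum>s<p ^ j. f (rotate s L))"
      using step_lemma[OF p R conjunct1[OF a] jn] a by blast
    define Gj where "Gj = witt_ghost p n (wsingle j f)"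
    have GC: "inC X p n Gj" unfolding Gj_def by (rule G_inC[OF p jn f])
    have Gb: "k < j \<Longrightarrow> Gj k L = 0" for k L unfolding Gj_def by (rule G_below[OF p0])
    have Gv: "Gj j L = (\<Sum>s<p ^ j. f (rotate s L))" for L
      unfolding Gj_def by (rule G_level[OF p0 jn]) (use tensorD(1)[OF f] in blast)
    define g' where "g' = (\<lambda>k L. g k L - Gj k L)"
    have g'C: "inC X p n g'" unfolding g'_def by (rule inC_diff[OF conjunct1[OF a] GC])
    have g'v: "\<forall>k<Suc j. \<forall>L. g' k L = 0"
    proof (intro allI impI)
      fix k L assume "k < Suc j"
      then consider "k < j" | "k = j" by linarith
      then show "g' k L = 0"
      proof cases
        case 1 then show ?thesis using a Gb by (simp add: g'_def)
      next
        case 2 then show ?thesis using fv Gv by (simp add: g'_def)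
      qed
    qed
    obtain m' where m': "m' \<in> witt_seqs X p n" "\<forall>k<Suc j. m' k = (\<lambda>L. 0)" "witt_ghost p n m' = g'"
      using step.IH g'C g'v by blast
    define m where "m = m'(j := f)"
    have mw: "m \<in> witt_seqs X p n" unfolding witt_seqs_def
    proof (intro CollectI conjI allI impI)
      fix i assume iN: "i \<le> n"
      show "m i \<in> tensor_pow_grp X (p ^ i)"
      proof (cases "i = j")
        case True then show ?thesis using f by (simp add: m_def)
      next
        case False then show ?thesis using m'(1) iN unfolding witt_seqs_def by (simp add: m_def)
      qed
    next
      fix i L assume iN: "n < i"
      then have "i \<noteq> j" using jn by simp
      then show "m i L = 0" using m'(1) iN unfolding witt_seqs_def by (simp add: m_def)
    qed
    have mv: "\<forall>k<j. m k = (\<lambda>L. 0)" using m'(2) by (simp add: m_def)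
    have "witt_ghost p n m = g"
    proof (intro ext)
      fix k L
      have "witt_ghost p n m k L = Gj k L + witt_ghost p n m' k L"
        unfolding m_def Gj_def by (rule ghost_update[OF p0 jn]) (use m'(2) in blast)
      then show "witt_ghost p n m k L = g k L" using m'(3) by (simp add: g'_def)
    qed
    then show "\<exists>m\<in>witt_seqs X p n. (\<forall>k<j. m k = (\<lambda>L. 0)) \<and> witt_ghost p n m = g"
      using mw mv by blast
  qed
qed

lemma lincomb_inj:
  assumes p: "prime p" and R: "orbit_reps X p n R" and c1: "c1 \<in> coeffs n R" and c2: "c2 \<in> coeffs n R"
    and eq: "lincomb p n c1 = lincomb p n c2"
  shows "c1 = c2"
proof -
  have p0: "0 < p" using p prime_gt_0_nat by blast
  define K where "K = {k. c1 k \<noteq> 0} \<union> {k. c2 k \<noteq> 0}"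
  have fK: "finite K" using coeffsD(1)[OF c1] coeffsD(1)[OF c2] by (simp add: K_def)
  define d where "d = (\<lambda>k. c1 k - c2 k)"
  have Z: "(\<Sum>k\<in>K. d k * witt_ghost p n (Vtau (fst k) (snd k)) j L) = 0" for j L
  proof -
    have "lincomb p n c1 j L = (\<Sum>k\<in>K. c1 k * witt_ghost p n (Vtau (fst k) (snd k)) j L)"
      by (rule lincomb_eq[OF fK]) (auto simp: K_def)
    moreover have "lincomb p n c2 j L = (\<Sum>k\<in>K. c2 k * witt_ghost p n (Vtau (fst k) (snd k)) j L)"
      by (rule lincomb_eq[OF fK]) (auto simp: K_def)
    ultimately show ?thesis using eq by (simp add: d_def left_diff_distrib sum_subtractf)
  qed
  have Kd: "k \<in> K \<Longrightarrow> fst k \<le> n \<and> snd k \<in> R (fst k)" for k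
    using coeffsD(2)[OF c1] coeffsD(2)[OF c2] by (cases k) (auto simp: K_def)
  have main: "\<forall>r. d (i, r) = 0" for i
  proof (induction i rule: less_induct)
    case (less i)
    show ?case
    proof
      fix r
      show "d (i, r) = 0"
      proof (cases "(i, r) \<in> K")
        case False then show ?thesis by (simp add: K_def d_def)
      next
        case True
        then have ir: "i \<le> n" "r \<in> R i" using Kd by auto
        have lr: "length r = p ^ i" using orbit_O1[OF R ir] by simp
        have trm: "d k * witt_ghost p n (Vtau (fst k) (snd k)) i r
                    = (if k = (i, r) then d (i, r) * stab (p ^ i) r else 0)" if kK: "k \<in> K" for k
        proof (cases "d k = 0")
          case True then show ?thesis by auto
        next
          case False
          obtain i' r' where k: "k = (i', r')" by (cases k)
          have i'r': "i' \<le> n" "r' \<in> R i'" using Kd[OF kK] k by auto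
          have lr': "length r' = p ^ i'" using orbit_O1[OF R i'r'] by simp
          consider "i' < i" | "i < i'" | "i' = i" by linarith
          then show ?thesis
          proof cases
            case 1 then show ?thesis using less.IH False k by auto
          next
            case 2 then show ?thesis using V_below[OF p0 lr' 2] k by auto
          next
            case 3
            have V: "witt_ghost p n (Vtau i r') i r = (\<Sum>s<p ^ i. if rotate s r = r' then 1 else 0)"
              using V_level[OF p0 _ ir(1)] lr' 3 by simp
            show ?thesis
            proof (cases "r' = r")
              case True then show ?thesis using V k 3 by (simp add: stab_def)
            next
              case False
              have "(if rotate s r = r' then 1 else 0) = (0::int)" for s
              proof (rule ccontr)
                assume "(if rotate s r = r' then 1 else 0) \<noteq> (0::int)"
                then have e: "rotate s r = r'" by (auto split: if_splits)
                then have "rotate s r \<in> R i" using i'r' 3 by simp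
                then have "rotate s r = r" using orbit_O2[OF R ir(1) ir(2)] by blast
                then show False using e False by simp
              qed
              then show ?thesis using V k 3 False by simp
            qed
          qed
        qed
        have "0 = (\<Sum>k\<in>K. d k * witt_ghost p n (Vtau (fst k) (snd k)) i r)" using Z by simp
        also have "\<dots> = (\<Sum>k\<in>K. if k = (i, r) then d (i, r) * stab (p ^ i) r else 0)"
          by (rule sum.cong) (use trm in auto)
        also have "\<dots> = d (i, r) * stab (p ^ i) r" using True fK by (simp add: sum.delta)
        finally have "d (i, r) * stab (p ^ i) r = 0" by simp
        moreover obtain u where "stab (p ^ i) r = int (p ^ (i - u))" using stab_structure[OF p lr] by blast
        then have "stab (p ^ i) r \<noteq> 0" using p0 by simp
        ultimately show ?thesis by simp
      qed
    qed
  qed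
  have "c1 (i, r) = c2 (i, r)" for i r using main[of i] by (simp add: d_def)
  then have "\<forall>k. c1 k = c2 k" by (simp add: split_paired_all)
  then show ?thesis by (simp add: fun_eq_iff)
qed

lemma part1:
  assumes p: "prime p" and R: "orbit_reps X p n R"
  shows "bij_betw (lincomb p n) (coeffs n R) (witt_W X p n)"
  unfolding bij_betw_def
proof
  show "inj_on (lincomb p n) (coeffs n R)"
    unfolding inj_on_def using lincomb_inj[OF p R] by blast
next
  have p0: "0 < p" using p prime_gt_0_nat by blast
  show "lincomb p n ` coeffs n R = witt_W X p n"
  proof
    show "lincomb p n ` coeffs n R \<subseteq> witt_W X p n"
    proof
      fix w assume "w \<in> lincomb p n ` coeffs n R"
      then obtain c where c: "c \<in> coeffs n R" "w = lincomb p n c" by blast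
      have "inC X p n (lincomb p n c)" by (rule lincomb_inC[OF p R c(1)])
      then obtain m where m: "m \<in> witt_seqs X p n" "witt_ghost p n m = lincomb p n c"
        using P2[OF p R, of 0] by auto
      then show "w \<in> witt_W X p n" unfolding witt_W_def using c by (metis image_eqI)
    qed
  next
    show "witt_W X p n \<subseteq> lincomb p n ` coeffs n R"
    proof
      fix w assume "w \<in> witt_W X p n"
      then obtain m where m: "m \<in> witt_seqs X p n" "w = witt_ghost p n m" unfolding witt_W_def by blast
      have e: "witt_ghost p n m = (\<lambda>j L. \<Sum>i\<in>{..n}. witt_ghost p n (wsingle i (m i)) j L)"
        by (intro ext) (rule ghost_decomp[OF p0])
      have "inC X p n (\<lambda>j L. \<Sum>i\<in>{..n}. witt_ghost p n (wsingle i (m i)) j L)"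
      proof (rule inC_sum)
        fix i assume "i \<in> {..n}"
        then have "i \<le> n" by simp
        moreover have "m i \<in> tensor_pow_grp X (p ^ i)" using m(1) \<open>i \<le> n\<close> unfolding witt_seqs_def by blast
        ultimately show "inC X p n (witt_ghost p n (wsingle i (m i)))" by (rule G_inC[OF p])
      qed simp
      then have "inC X p n w" using e m(2) by simp
      then obtain c where "c \<in> coeffs n R" "lincomb p n c = w" using P1[OF p R, of 0] by auto
      then show "w \<in> lincomb p n ` coeffs n R" by blast
    qed
  qed
qed


lemma rot_count:
  assumes p0: "0 < p" and lA: "length A = p ^ k" and lx: "length x = p ^ i" and ik: "i \<le> k"
  shows "(\<Sum>s<p ^ i. if rotate t A = rotate s (rep (p ^ (k - i)) x) then 1 else (0::int))
       = (\<Sum>s<p ^ i. if rotate s A = rep (p ^ (k - i)) x then 1 else 0)"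
proof -
  define X' where "X' = rep (p ^ (k - i)) x"
  have lX: "length X' = p ^ k" unfolding X'_def using lx pow_split[OF ik, of p] by simp
  have pX: "rotate (p ^ i) X' = X'" unfolding X'_def rotate_rep using lx by simp
  define h where "h = (\<lambda>u. if rotate u A = X' then 1 else (0::int))"
  have per: "h (u + p ^ i) = h u" for u
  proof -
    have e: "rotate (u + p ^ i) A = rotate (p ^ i) (rotate u A)" by (simp add: rotate_rotate add.commute)
    have "(rotate (p ^ i) (rotate u A) = X') \<longleftrightarrow> (rotate u A = X')"
    proof
      assume "rotate (p ^ i) (rotate u A) = X'"
      then have "rotate (p ^ i) (rotate u A) = rotate (p ^ i) X'" using pX by simp
      then show "rotate u A = X'" by (rule rotate_inj)
    next
      assume "rotate u A = X'" then show "rotate (p ^ i) (rotate u A) = X'" using pX by simp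
    qed
    then show ?thesis unfolding h_def e by simp
  qed
  have pik: "p ^ i \<le> p ^ k" using ik p0 by (simp add: power_increasing)
  have key: "(rotate t A = rotate s X') \<longleftrightarrow> (rotate (t + p ^ k - s) A = X')" if s: "s < p ^ i" for s
  proof -
    have sk: "s \<le> p ^ k" using s pik by simp
    have e1: "rotate (p ^ k - s) (rotate s X') = X'"
      using sk lX by (simp add: rotate_rotate)
    have e2: "rotate (p ^ k - s) (rotate t A) = rotate (t + p ^ k - s) A"
      using sk by (simp add: rotate_rotate add.commute)
    show ?thesis
    proof
      assume "rotate t A = rotate s X'"
      then show "rotate (t + p ^ k - s) A = X'" using e1 e2 by metis
    next
      assume "rotate (t + p ^ k - s) A = X'"
      then have "rotate (p ^ k - s) (rotate t A) = rotate (p ^ k - s) (rotate s X')" using e1 e2 by simp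
      then show "rotate t A = rotate s X'" by (rule rotate_inj)
    qed
  qed
  have "(\<Sum>s<p ^ i. if rotate t A = rotate s X' then 1 else (0::int)) = (\<Sum>s<p ^ i. h (t + p ^ k - s))"
    by (rule sum.cong) (auto simp: h_def key)
  also have "\<dots> = (\<Sum>s<p ^ i. h ((t + p ^ k - p ^ i) + p ^ i - s))"
    by (rule sum.cong) (use pik in auto)
  also have "\<dots> = (\<Sum>s<p ^ i. h s)" by (rule sum_reflect_periodic) (rule per)
  finally show ?thesis unfolding X'_def h_def .
qed

lemma zip_eq_iff:
  assumes "length P = length Q"
  shows "(W = zip P Q) \<longleftrightarrow> (map fst W = P \<and> map snd W = Q)"
  using assms by (auto simp: zip_map_fst_snd)

lemma rep_zip:
  assumes "length P = length Q"
  shows "rep m (zip P Q) = zip (rep m P) (rep m Q)"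
  using assms by (induction m) (simp_all add: zip_append)

lemma rot_zip_ind:
  assumes "length P = length Q"
  shows "(if rotate t L = zip P Q then 1 else (0::int)) =
         (if rotate t (map fst L) = P then 1 else 0) * (if rotate t (map snd L) = Q then 1 else 0)"
  using zip_eq_iff[OF assms, of "rotate t L"] by (simp add: rotate_map)

lemma part2:
  fixes x :: "'a list" and y :: "'b list"
  assumes p: "prime p" and ij: "i \<le> j" and jn: "j \<le> n" and lx: "length x = p ^ i" and ly: "length y = p ^ j"
  shows "ghost_star (witt_ghost p n (Vtau i x)) (witt_ghost p n (Vtau j y)) =
         (\<lambda>k L. \<Sum>s<p ^ i. witt_ghost p n
               (Vtau j (zip (concat (replicate (p ^ (j - i)) (rotate s x))) y)) k L)"
proof (intro ext)
  fix k and L :: "('a \<times> 'b) list"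
  have p0: "0 < p" using p prime_gt_0_nat by blast
  define z where "z = (\<lambda>s. zip (rep (p ^ (j - i)) (rotate s x)) y)"
  have lr: "length (rep (p ^ (j - i)) (rotate s x)) = p ^ j" for s
    using lx pow_split[OF ij, of p] by simp
  have lz: "length (z s) = p ^ j" for s unfolding z_def using lr ly by simp
  have zeq: "zip (rep (p ^ (j - i)) (rotate s x)) y = z s" for s by (simp add: z_def)
  define A where "A = map fst L"
  define B where "B = map snd L"
  have LHS: "ghost_star (witt_ghost p n (Vtau i x)) (witt_ghost p n (Vtau j y)) k L
      = witt_ghost p n (Vtau i x) k A * witt_ghost p n (Vtau j y) k B"
    by (simp add: ghost_star_def A_def B_def)
  show "ghost_star (witt_ghost p n (Vtau i x)) (witt_ghost p n (Vtau j y)) k L =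
        (\<Sum>s<p ^ i. witt_ghost p n (Vtau j (zip (rep (p ^ (j - i)) (rotate s x)) y)) k L)"
    unfolding LHS zeq
  proof (cases "k \<le> n \<and> j \<le> k")
    case False
    then have "witt_ghost p n (Vtau i x) k A * witt_ghost p n (Vtau j y) k B = 0"
      using ghost_delta[OF p0 lx] ghost_delta[OF p0 ly] by auto
    moreover have "witt_ghost p n (Vtau j (z s)) k L = 0" for s
      using ghost_delta[OF p0 lz] False by auto
    ultimately show "witt_ghost p n (Vtau i x) k A * witt_ghost p n (Vtau j y) k B =
        (\<Sum>s<p ^ i. witt_ghost p n (Vtau j (z s)) k L)" by simp
  next
    case True
    then have kn: "k \<le> n" and jk: "j \<le> k" by auto
    have ik: "i \<le> k" using ij jk by simp
    define X' where "X' = rep (p ^ (k - i)) x"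
    define Y' where "Y' = rep (p ^ (k - j)) y"
    have lX: "length X' = p ^ k" unfolding X'_def using lx pow_split[OF ik, of p] by simp
    have lY: "length Y' = p ^ k" unfolding Y'_def using ly pow_split[OF jk, of p] by simp
    have rz: "rep (p ^ (k - j)) (z s) = zip (rotate s X') Y'" for s
    proof -
      have "rep (p ^ (k - j)) (z s) = zip (rep (p ^ (k - j)) (rep (p ^ (j - i)) (rotate s x))) Y'"
        unfolding z_def Y'_def by (rule rep_zip) (use lr ly in simp)
      also have "p ^ (k - j) * p ^ (j - i) = p ^ (k - i)"
        using ij jk by (simp add: power_add[symmetric])
      then have "rep (p ^ (k - j)) (rep (p ^ (j - i)) (rotate s x)) = rotate s X'"
        by (simp add: rep_rep X'_def rotate_rep)
      finally show ?thesis .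
    qed
    define a where "a = (\<lambda>t s. if rotate t A = rotate s X' then 1 else (0::int))"
    define b where "b = (\<lambda>t. if rotate t B = Y' then 1 else (0::int))"
    have RHS: "(\<Sum>s<p ^ i. witt_ghost p n (Vtau j (z s)) k L) = (\<Sum>t<p ^ j. b t * (\<Sum>s<p ^ i. a t s))"
    proof -
      have "(\<Sum>s<p ^ i. witt_ghost p n (Vtau j (z s)) k L) = (\<Sum>s<p ^ i. \<Sum>t<p ^ j. a t s * b t)"
      proof (rule sum.cong[OF refl])
        fix s
        have "witt_ghost p n (Vtau j (z s)) k L = (\<Sum>t<p ^ j. if rotate t L = zip (rotate s X') Y' then 1 else 0)"
          using ghost_delta[OF p0 lz] True rz by simp
        also have "\<dots> = (\<Sum>t<p ^ j. a t s * b t)"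
          by (rule sum.cong[OF refl]) (simp add: rot_zip_ind lX lY a_def b_def A_def B_def)
        finally show "witt_ghost p n (Vtau j (z s)) k L = (\<Sum>t<p ^ j. a t s * b t)" .
      qed
      also have "\<dots> = (\<Sum>t<p ^ j. \<Sum>s<p ^ i. a t s * b t)" by (rule sum.swap)
      also have "\<dots> = (\<Sum>t<p ^ j. b t * (\<Sum>s<p ^ i. a t s))"
        by (simp add: sum_distrib_left mult.commute)
      finally show ?thesis .
    qed
    have VA: "witt_ghost p n (Vtau i x) k A = (\<Sum>s<p ^ i. if rotate s A = X' then 1 else 0)"
      using ghost_delta[OF p0 lx] kn ik by (simp add: X'_def)
    have VB: "witt_ghost p n (Vtau j y) k B = (\<Sum>t<p ^ j. b t)"
      using ghost_delta[OF p0 ly] kn jk by (simp add: Y'_def b_def)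
    show "witt_ghost p n (Vtau i x) k A * witt_ghost p n (Vtau j y) k B =
        (\<Sum>s<p ^ i. witt_ghost p n (Vtau j (z s)) k L)"
    proof (cases "length L = p ^ k")
      case True
      define cA where "cA = (\<Sum>s<p ^ i. if rotate s A = X' then 1 else (0::int))"
      have e: "(\<Sum>s<p ^ i. a t s) = cA" for t
        unfolding a_def X'_def cA_def by (rule rot_count[OF p0 _ lx ik]) (simp add: A_def True)
      have "(\<Sum>s<p ^ i. witt_ghost p n (Vtau j (z s)) k L) = (\<Sum>t<p ^ j. b t * cA)" using RHS e by simp
      also have "\<dots> = (\<Sum>t<p ^ j. b t) * cA" by (rule sum_distrib_right[symmetric])
      finally show ?thesis using VA VB by (simp add: cA_def mult.commute)
    next
      case False
      then have "b t = 0" for t using lY by (auto simp: b_def B_def)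
      then show ?thesis unfolding RHS VB by simp
    qed
  qed
qed

lemma part3:
  fixes x :: "'a list" and y :: "'b list"
  assumes p: "prime p" and ji: "j \<le> i" and iN: "i \<le> n" and lx: "length x = p ^ i" and ly: "length y = p ^ j"
  shows "ghost_star (witt_ghost p n (Vtau i x)) (witt_ghost p n (Vtau j y)) =
         (\<lambda>k L. \<Sum>s<p ^ j. witt_ghost p n
               (Vtau i (zip x (concat (replicate (p ^ (i - j)) (rotate s y))))) k L)"
proof (intro ext)
  fix k and L :: "('a \<times> 'b) list"
  have p0: "0 < p" using p prime_gt_0_nat by blast
  define z where "z = (\<lambda>s. zip x (rep (p ^ (i - j)) (rotate s y)))"
  have lr: "length (rep (p ^ (i - j)) (rotate s y)) = p ^ i" for s
    using ly pow_split[OF ji, of p] by simp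
  have lz: "length (z s) = p ^ i" for s unfolding z_def using lr lx by simp
  have zeq: "zip x (rep (p ^ (i - j)) (rotate s y)) = z s" for s by (simp add: z_def)
  define A where "A = map fst L"
  define B where "B = map snd L"
  have LHS: "ghost_star (witt_ghost p n (Vtau i x)) (witt_ghost p n (Vtau j y)) k L
      = witt_ghost p n (Vtau i x) k A * witt_ghost p n (Vtau j y) k B"
    by (simp add: ghost_star_def A_def B_def)
  show "ghost_star (witt_ghost p n (Vtau i x)) (witt_ghost p n (Vtau j y)) k L =
        (\<Sum>s<p ^ j. witt_ghost p n (Vtau i (zip x (rep (p ^ (i - j)) (rotate s y)))) k L)"
    unfolding LHS zeq
  proof (cases "k \<le> n \<and> i \<le> k")
    case False
    then have "witt_ghost p n (Vtau i x) k A * witt_ghost p n (Vtau j y) k B = 0"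
      using ghost_delta[OF p0 lx] ghost_delta[OF p0 ly] by auto
    moreover have "witt_ghost p n (Vtau i (z s)) k L = 0" for s
      using ghost_delta[OF p0 lz] False by auto
    ultimately show "witt_ghost p n (Vtau i x) k A * witt_ghost p n (Vtau j y) k B =
        (\<Sum>s<p ^ j. witt_ghost p n (Vtau i (z s)) k L)" by simp
  next
    case True
    then have kn: "k \<le> n" and ik: "i \<le> k" by auto
    have jk: "j \<le> k" using ji ik by simp
    define X' where "X' = rep (p ^ (k - i)) x"
    define Y' where "Y' = rep (p ^ (k - j)) y"
    have lX: "length X' = p ^ k" unfolding X'_def using lx pow_split[OF ik, of p] by simp
    have lY: "length Y' = p ^ k" unfolding Y'_def using ly pow_split[OF jk, of p] by simp
    have rz: "rep (p ^ (k - i)) (z s) = zip X' (rotate s Y')" for s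
    proof -
      have "rep (p ^ (k - i)) (z s) = zip X' (rep (p ^ (k - i)) (rep (p ^ (i - j)) (rotate s y)))"
        unfolding z_def X'_def by (rule rep_zip) (use lr lx in simp)
      also have "p ^ (k - i) * p ^ (i - j) = p ^ (k - j)"
        using ji ik by (simp add: power_add[symmetric])
      then have "rep (p ^ (k - i)) (rep (p ^ (i - j)) (rotate s y)) = rotate s Y'"
        by (simp add: rep_rep Y'_def rotate_rep)
      finally show ?thesis .
    qed
    define a where "a = (\<lambda>t. if rotate t A = X' then 1 else (0::int))"
    define b where "b = (\<lambda>t s. if rotate t B = rotate s Y' then 1 else (0::int))"
    have RHS: "(\<Sum>s<p ^ j. witt_ghost p n (Vtau i (z s)) k L) = (\<Sum>t<p ^ i. a t * (\<Sum>s<p ^ j. b t s))"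
    proof -
      have "(\<Sum>s<p ^ j. witt_ghost p n (Vtau i (z s)) k L) = (\<Sum>s<p ^ j. \<Sum>t<p ^ i. a t * b t s)"
      proof (rule sum.cong[OF refl])
        fix s
        have "witt_ghost p n (Vtau i (z s)) k L = (\<Sum>t<p ^ i. if rotate t L = zip X' (rotate s Y') then 1 else 0)"
          using ghost_delta[OF p0 lz] True rz by simp
        also have "\<dots> = (\<Sum>t<p ^ i. a t * b t s)"
          by (rule sum.cong[OF refl]) (simp add: rot_zip_ind lX lY a_def b_def A_def B_def)
        finally show "witt_ghost p n (Vtau i (z s)) k L = (\<Sum>t<p ^ i. a t * b t s)" .
      qed
      also have "\<dots> = (\<Sum>t<p ^ i. \<Sum>s<p ^ j. a t * b t s)" by (rule sum.swap)
      also have "\<dots> = (\<Sum>t<p ^ i. a t * (\<Sum>s<p ^ j. b t s))"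
        by (simp add: sum_distrib_left)
      finally show ?thesis .
    qed
    have VA: "witt_ghost p n (Vtau i x) k A = (\<Sum>t<p ^ i. a t)"
      using ghost_delta[OF p0 lx] kn ik by (simp add: X'_def a_def)
    have VB: "witt_ghost p n (Vtau j y) k B = (\<Sum>s<p ^ j. if rotate s B = Y' then 1 else 0)"
      using ghost_delta[OF p0 ly] kn jk by (simp add: Y'_def)
    show "witt_ghost p n (Vtau i x) k A * witt_ghost p n (Vtau j y) k B =
        (\<Sum>s<p ^ j. witt_ghost p n (Vtau i (z s)) k L)"
    proof (cases "length L = p ^ k")
      case True
      define cB where "cB = (\<Sum>s<p ^ j. if rotate s B = Y' then 1 else (0::int))"
      have e: "(\<Sum>s<p ^ j. b t s) = cB" for t
        unfolding b_def Y'_def cB_def by (rule rot_count[OF p0 _ ly jk]) (simp add: B_def True)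
      have "(\<Sum>s<p ^ j. witt_ghost p n (Vtau i (z s)) k L) = (\<Sum>t<p ^ i. a t * cB)" using RHS e by simp
      also have "\<dots> = (\<Sum>t<p ^ i. a t) * cB" by (rule sum_distrib_right[symmetric])
      finally show ?thesis using VA VB by (simp add: cB_def)
    next
      case False
      then have "a t = 0" for t using lX by (auto simp: a_def A_def)
      then show ?thesis unfolding RHS VA by simp
    qed
  qed
qed


theorem proposition1p9:
  fixes p n :: nat and X :: "'a set" and Y :: "'b set"
  assumes "prime (p::nat)"
  shows "(\<forall>R. orbit_reps X p n R \<longrightarrow>
           bij_betw (lincomb p n) (coeffs n R) (witt_W X p n)) \<and>
         (\<forall>i j x y. i \<le> j \<and> j \<le> n \<and> length x = p ^ i \<and> set x \<subseteq> X
           \<and> length y = p ^ j \<and> set y \<subseteq> Y \<longrightarrow>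
           ghost_star (witt_ghost p n (Vtau i x)) (witt_ghost p n (Vtau j y)) =
           (\<lambda>k L. \<Sum>s<p ^ i. witt_ghost p n
               (Vtau j (zip (concat (replicate (p ^ (j - i)) (rotate s x))) y)) k L)) \<and>
         (\<forall>i j x y. j \<le> i \<and> i \<le> n \<and> length x = p ^ i \<and> set x \<subseteq> X
           \<and> length y = p ^ j \<and> set y \<subseteq> Y \<longrightarrow>
           ghost_star (witt_ghost p n (Vtau i x)) (witt_ghost p n (Vtau j y)) =
           (\<lambda>k L. \<Sum>s<p ^ j. witt_ghost p n
               (Vtau i (zip x (concat (replicate (p ^ (i - j)) (rotate s y))))) k L))"
proof (intro conjI allI impI)
  fix R assume "orbit_reps X p n R"
  then show "bij_betw (lincomb p n) (coeffs n R) (witt_W X p n)" by (rule part1[OF assms])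
next
  fix i j and x :: "'a list" and y :: "'b list"
  assume "i \<le> j \<and> j \<le> n \<and> length x = p ^ i \<and> set x \<subseteq> X \<and> length y = p ^ j \<and> set y \<subseteq> Y"
  then show "ghost_star (witt_ghost p n (Vtau i x)) (witt_ghost p n (Vtau j y)) =
           (\<lambda>k L. \<Sum>s<p ^ i. witt_ghost p n
               (Vtau j (zip (concat (replicate (p ^ (j - i)) (rotate s x))) y)) k L)"
    using part2[OF assms] by blast
next
  fix i j and x :: "'a list" and y :: "'b list"
  assume "j \<le> i \<and> i \<le> n \<and> length x = p ^ i \<and> set x \<subseteq> X \<and> length y = p ^ j \<and> set y \<subseteq> Y"
  then show "ghost_star (witt_ghost p n (Vtau i x)) (witt_ghost p n (Vtau j y)) =
           (\<lambda>k L. \<Sum>s<p ^ j. witt_ghost p n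
               (Vtau i (zip x (concat (replicate (p ^ (i - j)) (rotate s y))))) k L)"
    using part3[OF assms] by blast
qed

end
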